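(* Fix a constant $\beta\ge 0$. The class of distributions supported on $[0,1]$ with $\textsc{IrregCoeff}(F)\le\beta$ can be described with $\tilde{O}(\epsilon^{-1/2})$ bits and error $\epsilon$ (the hidden constants may depend on $\beta$).
   Context: For a distribution with CDF $F$, $\textsc{IrregCoeff}(F)=\inf\{\beta\ge0: q\mapsto qF^{-1}(1-q)+\beta\int_{1-q}^1F^{-1}(x)\,dx \text{ is concave on }[0,1]\}$. For smooth distributions (no point masses, $C^1$ PDF $f$), $\textsc{IrregCoeff}(F)\le\beta$ corresponds to $f'(v)(1-F(v))\ge-(2+\beta)f(v)^2$. The Lévy distance is $\mathrm{L\acute{e}vy}(F,G)=\inf\{\epsilon: F(v-\epsilon)-\epsilon\le G(v)\le F(v+\epsilon)+\epsilon\ \forall v\}$. A class $\mathcal{C}$ can be described with $b$ bits and error $\epsilon$ if there is a class $\mathcal{C}'$ with $|\mathcal{C}'|\le2^b$ such that every $F\in\mathcal{C}$ has some $F'\in\mathcal{C}'$ with $\mathrm{L\acute{e}vy}(F,F')\le\epsilon$. $\tilde{O}$ hides polylog$(1/\epsilon)$ factors. *)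

theory Defs
  imports "HOL-Probability.Probability"
begin

text \<open>For x > 0 it is the usual inf{v. F v \<ge> x}; at x = 0 we use the left end of
  the support, inf{v. F v > 0} (the left limit of the quantile function).\<close>
definition quantile :: "(real \<Rightarrow> real) \<Rightarrow> real \<Rightarrow> real" where
  "quantile F x = (if x = 0 then Inf {v. 0 < F v} else Inf {v. x \<le> F v})"

text \<open>Irregularity coefficient, valued in the extended reals (Inf of empty set = \<infinity>).\<close>
definition irreg_coeff :: "(real \<Rightarrow> real) \<Rightarrow> ereal" where
  "irreg_coeff F = Inf (ereal ` {\<beta>. \<beta> \<ge> 0 \<and>
      concave_on {0..1} (\<lambda>q. q * quantile F (1 - q) + \<beta> * integral {1 - q..1} (quantile F))})"

definition levy_dist :: "(real \<Rightarrow> real) \<Rightarrow> (real \<Rightarrow> real) \<Rightarrow> real" where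
  "levy_dist F G = Inf {\<epsilon>. \<epsilon> \<ge> 0 \<and>
      (\<forall>v. F (v - \<epsilon>) - \<epsilon> \<le> G v \<and> G v \<le> F (v + \<epsilon>) + \<epsilon>)}"

definition describable :: "real measure set \<Rightarrow> real \<Rightarrow> real \<Rightarrow> bool" where
  "describable \<C> b \<epsilon> \<longleftrightarrow> (\<exists>\<C>'. finite \<C>' \<and> real (card \<C>') \<le> 2 powr b \<and>
      (\<forall>M'\<in>\<C>'. real_distribution M') \<and>
      (\<forall>M\<in>\<C>. \<exists>M'\<in>\<C>'. levy_dist (cdf M) (cdf M') \<le> \<epsilon>))"

definition irreg_class :: "real \<Rightarrow> real measure set" where
  "irreg_class \<beta> = {M. real_distribution M \<and> measure M {0..1} = 1 \<and>
      irreg_coeff (cdf M) \<le> ereal \<beta>}"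

end

theory Submission
  imports Defs
begin

locale dist01 = real_distribution M for M +
  assumes supp: "measure M {0..1} = 1"
begin

abbreviation "F \<equiv> cdf M"

lemma F_neg: "v < 0 \<Longrightarrow> F v = 0"
proof -
  assume v: "v < 0"
  have "{..v} \<subseteq> space M - {0..1}" using v by auto
  hence "F v \<le> measure M (space M - {0..1})" unfolding cdf_def
    by (intro finite_measure_mono) auto
  also have "\<dots> = 0" using prob_compl[of "{0..1}"] supp by simp
  finally show ?thesis using cdf_nonneg[of v] by linarith
qed

lemma F_one: "1 \<le> v \<Longrightarrow> F v = 1"
proof -
  assume v: "1 \<le> v"
  have "measure M {0..1} \<le> F v" unfolding cdf_def using v
    by (intro finite_measure_mono) auto
  thus ?thesis using supp cdf_bounded_prob[of v] by linarith
qed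

lemma F_mono: "x \<le> y \<Longrightarrow> F x \<le> F y" by (rule cdf_nondecreasing)

lemma Qset_ne: "0 < x \<Longrightarrow> x \<le> 1 \<Longrightarrow> 1 \<in> {w. x \<le> F w}"
  using F_one by auto

lemma Qset_bdd: "0 < x \<Longrightarrow> w \<in> {w. x \<le> F w} \<Longrightarrow> 0 \<le> w"
  using F_neg by (metis mem_Collect_eq not_le not_less)

lemma Qset_bdd': "0 < x \<Longrightarrow> bdd_below {w. x \<le> F w}"
  by (rule bdd_belowI[where m=0]) (use Qset_bdd in auto)

lemma Q_def': "0 < x \<Longrightarrow> quantile F x = Inf {w. x \<le> F w}"
  unfolding quantile_def by simp

lemma Q_le1: "0 < x \<Longrightarrow> x \<le> 1 \<Longrightarrow> quantile F x \<le> 1"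
  unfolding Q_def' using Qset_ne Qset_bdd'
  by (intro cInf_lower) auto

lemma Q_ge0: "0 < x \<Longrightarrow> x \<le> 1 \<Longrightarrow> 0 \<le> quantile F x"
  unfolding Q_def' using Qset_ne Qset_bdd
  by (intro cInf_greatest) auto

lemma F_Q: "0 < x \<Longrightarrow> x \<le> 1 \<Longrightarrow> x \<le> F (quantile F x)"
proof -
  assume x: "0 < x" "x \<le> 1"
  let ?q = "quantile F x"
  have bdd: "bdd_below {w. x \<le> F w}" using Qset_bdd' x by auto
  have ne: "{w. x \<le> F w} \<noteq> {}" using Qset_ne x by auto
  have ev: "eventually (\<lambda>w. x \<le> F w) (at_right ?q)"
  proof (rule eventually_at_rightI[of ?q "?q + 1"])
    fix w assume w: "w \<in> {?q<..<?q+1}"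
    hence "Inf {w. x \<le> F w} < w" using Q_def' x by auto
    then obtain w' where "w' \<in> {w. x \<le> F w}" "w' < w"
      using cInf_less_iff[OF ne bdd] by auto
    thus "x \<le> F w" using F_mono[of w' w] by auto
  qed simp
  have "(F \<longlongrightarrow> F ?q) (at_right ?q)"
    using cdf_is_right_cont[of ?q] by (simp add: continuous_within)
  thus ?thesis using ev by (intro tendsto_lowerbound) auto
qed

lemma Q_galois: "0 < x \<Longrightarrow> x \<le> 1 \<Longrightarrow> quantile F x \<le> w \<longleftrightarrow> x \<le> F w"
proof
  assume x: "0 < x" "x \<le> 1"
  { assume "quantile F x \<le> w" thus "x \<le> F w" using F_Q[OF x] F_mono by (meson order_trans) }
  { assume "x \<le> F w" thus "quantile F x \<le> w" unfolding Q_def'[OF x(1)]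
      using Qset_bdd' x by (intro cInf_lower) auto }
qed

lemma Q_mono: "0 < x \<Longrightarrow> x \<le> y \<Longrightarrow> y \<le> 1 \<Longrightarrow> quantile F x \<le> quantile F y"
  using Q_galois F_Q by (meson less_le_trans order_trans)

lemma Q0_le: "0 < y \<Longrightarrow> y \<le> 1 \<Longrightarrow> quantile F 0 \<le> quantile F y"
proof -
  assume y: "0 < y" "y \<le> 1"
  have "quantile F 0 = Inf {v. 0 < F v}" unfolding quantile_def by simp
  also have "\<dots> \<le> Inf {w. y \<le> F w}"
    using Qset_ne[OF y] y
    by (intro cInf_superset_mono) (auto intro!: bdd_belowI[where m=0] simp: F_neg not_less[symmetric] intro: ccontr)
  finally show ?thesis using Q_def' y by simp
qed

lemma Q_mono01: "0 \<le> x \<Longrightarrow> x \<le> y \<Longrightarrow> y \<le> 1 \<Longrightarrow> quantile F x \<le> quantile F y"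
  by (metis Q0_le Q_mono antisym_conv1 order.refl order_le_less_trans)

end

context dist01 begin

abbreviation "Q \<equiv> quantile F"
definition "V q = Q (1 - q)"
definition "S q = integral {1 - q..1} Q"

lemma Q_01: "0 \<le> x \<Longrightarrow> x \<le> 1 \<Longrightarrow> 0 \<le> Q x \<and> Q x \<le> 1"
proof -
  assume x: "0 \<le> x" "x \<le> 1"
  show ?thesis
  proof (cases "x = 0")
    case True
    have "Q 0 \<le> Q 1" using Q0_le by simp
    moreover have "0 \<le> Q 0" unfolding quantile_def
    proof (simp, intro cInf_greatest)
      show "{v. 0 < F v} \<noteq> {}" using F_one[of 1] by (auto intro!: exI[of _ 1])
      fix v assume "v \<in> {v. 0 < F v}" thus "0 \<le> v" using F_neg by (metis mem_Collect_eq not_le less_irrefl)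
    qed
    ultimately show ?thesis using True Q_le1[of 1] by simp
  next
    case False thus ?thesis using x Q_le1 Q_ge0 by simp
  qed
qed

lemma Q_int: "0 \<le> a \<Longrightarrow> b \<le> 1 \<Longrightarrow> Q integrable_on {a..b}"
  by (intro integrable_on_mono_on) (auto simp: mono_on_def intro!: Q_mono01)

lemma int_bounds:
  assumes "0 \<le> a" "a \<le> b" "b \<le> 1"
  shows "(b - a) * Q a \<le> integral {a..b} Q \<and> integral {a..b} Q \<le> (b - a) * Q b"
proof
  have "integral {a..b} (\<lambda>_. Q a) \<le> integral {a..b} Q"
    using assms by (intro integral_le Q_int) (auto intro: Q_mono01)
  thus "(b - a) * Q a \<le> integral {a..b} Q" using assms by simp
  have "integral {a..b} Q \<le> integral {a..b} (\<lambda>_. Q b)"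
    using assms by (intro integral_le Q_int) (auto intro: Q_mono01)
  thus "integral {a..b} Q \<le> (b - a) * Q b" using assms by simp
qed

lemma S_diff:
  assumes "0 \<le> q" "q \<le> q'" "q' \<le> 1"
  shows "(q' - q) * V q' \<le> S q' - S q \<and> S q' - S q \<le> (q' - q) * V q"
proof -
  have "integral {1-q'..1-q} Q + integral {1-q..1} Q = integral {1-q'..1} Q"
    using Henstock_Kurzweil_Integration.integral_combine[where f=Q and a="1-q'" and c="1-q" and b="1::real"] Q_int[of "1-q'" 1] assms by simp
  hence "S q' - S q = integral {1-q'..1-q} Q" unfolding S_def by simp
  thus ?thesis using int_bounds[of "1-q'" "1-q"] assms unfolding V_def by auto
qed

lemma V_01: "0 \<le> q \<Longrightarrow> q \<le> 1 \<Longrightarrow> 0 \<le> V q \<and> V q \<le> 1"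
  unfolding V_def using Q_01 by simp

lemma V_mono: "0 \<le> q \<Longrightarrow> q \<le> q' \<Longrightarrow> q' \<le> 1 \<Longrightarrow> V q' \<le> V q"
  unfolding V_def by (intro Q_mono01) auto

lemma S_lip: "0 \<le> q \<Longrightarrow> q \<le> 1 \<Longrightarrow> 0 \<le> q' \<Longrightarrow> q' \<le> 1 \<Longrightarrow> \<bar>S q' - S q\<bar> \<le> \<bar>q' - q\<bar>"
proof -
  assume a: "0 \<le> q" "q \<le> 1" "0 \<le> q'" "q' \<le> 1"
  { fix x y :: real assume "0 \<le> x" "x \<le> y" "y \<le> 1"
    hence "\<bar>S y - S x\<bar> \<le> \<bar>y - x\<bar>" using S_diff[of x y] V_01[of x] V_01[of y]
      by (smt (verit) mult_left_le mult_nonneg_nonneg) }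
  from this[of q q'] this[of q' q] a show ?thesis by (cases "q \<le> q'") (auto simp: abs_minus_commute)
qed

lemma S_cont: "continuous_on {0..1} S"
  unfolding continuous_on_iff
proof (intro ballI allI impI)
  fix x e :: real assume x: "x \<in> {0..1}" and e: "0 < e"
  show "\<exists>d>0. \<forall>x'\<in>{0..1}. dist x' x < d \<longrightarrow> dist (S x') (S x) < e"
  proof (intro exI[of _ e] conjI ballI impI)
    fix x' assume "x' \<in> {0..1}" "dist x' x < e"
    thus "dist (S x') (S x) < e" using S_lip[of x x'] x by (auto simp: dist_real_def)
  qed (rule e)
qed

end

locale reg01 = dist01 +
  fixes b :: real
  assumes b0: "0 \<le> b"
  and conc: "concave_on {0..1} (\<lambda>q. q * quantile (cdf M) (1 - q) + b * integral {1 - q..1} (quantile (cdf M)))"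
begin

definition "H q = q * V q + b * S q"

lemma H_conc: "concave_on {0..1} H"
  using conc unfolding H_def V_def S_def by simp

lemma V_cont: "continuous_on {0<..<1} V"
proof -
  have "continuous_on {0<..<1} H"
    using H_conc unfolding concave_on_def
    by (intro continuous_on_minus[of _ "\<lambda>x. - H x", simplified] convex_on_continuous)
       (auto intro: convex_on_subset)
  moreover have "continuous_on {0<..<1} S" using S_cont by (rule continuous_on_subset) auto
  ultimately have "continuous_on {0<..<1} (\<lambda>q. (H q - b * S q) / q)"
    by (intro continuous_intros) auto
  moreover have "\<And>q. q \<in> {0<..<1} \<Longrightarrow> (H q - b * S q) / q = V q" unfolding H_def by auto
  ultimately show ?thesis using continuous_on_cong by (metis (no_types, lifting))
qed

lemma three_point:
  assumes q: "0 \<le> q1" "q1 < q2" "q2 < q3" "q3 \<le> 1"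
  shows "q2 * ((q2 - q1) * (V q2 - V q3) - (q3 - q2) * (V q1 - V q2))
     \<ge> - (1 + b) * (q2 - q1) * (q3 - q2) * (V q1 - V q3)"
proof -
  define a where "a = q2 - q1"
  define c where "c = q3 - q2"
  define t where "t = a / (a + c)"
  have ac: "a > 0" "c > 0" using q unfolding a_def c_def by auto
  have t01: "0 \<le> t" "t \<le> 1" using ac unfolding t_def by auto
  have "t * (q3 - q1) = a" using ac unfolding t_def a_def c_def by (simp add: field_simps)
  hence pt: "(1 - t) *\<^sub>R q1 + t *\<^sub>R q3 = q2"
    unfolding a_def by (simp add: algebra_simps)
  have "H q2 \<ge> (1 - t) * H q1 + t * H q3"
    using concave_onD[OF H_conc t01, of q1 q3] q pt by auto
  hence "(a + c) * H q2 \<ge> (a + c) * ((1 - t) * H q1 + t * H q3)"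
    using ac by (intro mult_left_mono) auto
  also have "(a + c) * ((1 - t) * H q1 + t * H q3) = ((a + c) * (1 - t)) * H q1 + ((a + c) * t) * H q3"
    by (simp add: algebra_simps)
  also have "(a + c) * (1 - t) = c" "(a + c) * t = a" using ac unfolding t_def by (simp_all add: field_simps)
  hence "((a + c) * (1 - t)) * H q1 + ((a + c) * t) * H q3 = c * H q1 + a * H q3" by simp
  finally have main: "(a + c) * H q2 \<ge> c * H q1 + a * H q3" .
  have s1: "a * V q2 \<le> S q2 - S q1" "S q2 - S q1 \<le> a * V q1"
    using S_diff[of q1 q2] q unfolding a_def by auto
  have s2: "c * V q3 \<le> S q3 - S q2" "S q3 - S q2 \<le> c * V q2"
    using S_diff[of q2 q3] q unfolding c_def by auto
  have "a * (S q3 - S q2) - c * (S q2 - S q1) \<ge> a * (c * V q3) - c * (a * V q1)"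
    using s1 s2 ac by (smt (verit) mult_left_mono)
  hence "b * (a * (S q3 - S q2) - c * (S q2 - S q1)) \<ge> b * (a * (c * V q3) - c * (a * V q1))"
    using b0 by (intro mult_left_mono) auto
  moreover have q13: "q1 = q2 - a" "q3 = q2 + c" unfolding a_def c_def by auto
  ultimately have "q2 * (a * (V q2 - V q3) - c * (V q1 - V q2)) + a * c * (V q1 - V q3)
      \<ge> - b * a * c * (V q1 - V q3)"
    using main unfolding H_def q13 by (simp add: algebra_simps)
  thus ?thesis unfolding a_def[symmetric] c_def[symmetric] by (simp add: algebra_simps)
qed

end

lemma class_reg:
  assumes "M \<in> irreg_class \<beta>"
  shows "\<exists>b. 0 \<le> b \<and> b \<le> \<beta> + 1 \<and> reg01 M b"
proof -
  have M: "real_distribution M" "measure M {0..1} = 1" "irreg_coeff (cdf M) \<le> ereal \<beta>"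
    using assms unfolding irreg_class_def by auto
  have "irreg_coeff (cdf M) < ereal (\<beta> + 1)" using M(3) by (simp add: order_le_less_trans)
  then obtain b where b: "b \<ge> 0" "concave_on {0..1} (\<lambda>q. q * quantile (cdf M) (1 - q) + b * integral {1 - q..1} (quantile (cdf M)))"
    "ereal b < ereal (\<beta> + 1)"
    unfolding irreg_coeff_def Inf_less_iff by auto
  have "reg01 M b" unfolding reg01_def reg01_axioms_def dist01_def dist01_axioms_def using M b by auto
  thus ?thesis using b by (intro exI[of _ b]) auto
qed

locale approx = reg01 +
  fixes e :: real
  assumes e_pos: "0 < e" and e_half: "e < 1/2"
begin

definition "c = e / 4"
definition "sf q = q - V q"
definition "Mn = nat \<lceil>32 / e\<rceil>"
definition "tau = (sf (1 - c) - sf c) / real Mn"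
definition "qs i = (SOME q. c \<le> q \<and> q \<le> 1 - c \<and> sf q = sf c + real i * tau)"
definition "Vs i = V (qs i)"
definition "dq i = qs (Suc i) - qs i"
definition "dv i = Vs i - Vs (Suc i)"
definition "al i = dv i / tau"

lemma c_props: "0 < c" "c \<le> 1/8" "c < 1 - c" using e_pos e_half unfolding c_def by auto

lemma sf_strict: "0 \<le> q \<Longrightarrow> q < q' \<Longrightarrow> q' \<le> 1 \<Longrightarrow> sf q < sf q'"
  unfolding sf_def using V_mono[of q q'] by auto

lemma sf_cont: "continuous_on {c..1-c} sf"
proof -
  have "continuous_on {c..1-c} V"
    by (rule continuous_on_subset[OF V_cont]) (use c_props in auto)
  thus ?thesis unfolding sf_def by (intro continuous_intros)
qed

lemma Mn_ge: "32 / e \<le> real Mn" "0 < Mn"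
proof -
  show "32 / e \<le> real Mn" unfolding Mn_def by linarith
  moreover have "0 < 32 / e" using e_pos by auto
  ultimately have "0 < real Mn" by linarith
  thus "0 < Mn" by simp
qed

lemma sf_range: "1 - 2 * c \<le> sf (1 - c) - sf c" "sf (1 - c) - sf c \<le> 2"
proof -
  have v: "V (1 - c) \<le> V c" "0 \<le> V (1 - c)" "V c \<le> 1"
    using V_mono[of c "1-c"] V_01[of c] V_01[of "1-c"] c_props by auto
  thus "1 - 2 * c \<le> sf (1 - c) - sf c" "sf (1 - c) - sf c \<le> 2" unfolding sf_def using c_props by auto
qed

lemma tau_pos: "0 < tau" and tau_le: "tau \<le> e / 16"
proof -
  show "0 < tau" unfolding tau_def using sf_range c_props Mn_ge by auto
  have "tau \<le> 2 / real Mn" unfolding tau_def using sf_range Mn_ge by (intro divide_right_mono) auto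
  also have "\<dots> \<le> 2 / (32 / e)" using Mn_ge e_pos by (intro divide_left_mono) auto
  also have "\<dots> = e / 16" by simp
  finally show "tau \<le> e / 16" .
qed

lemma qs_prop:
  assumes "i \<le> Mn"
  shows "c \<le> qs i \<and> qs i \<le> 1 - c \<and> sf (qs i) = sf c + real i * tau"
proof -
  have "real i * tau \<le> real Mn * tau" using assms tau_pos by (intro mult_right_mono) auto
  also have "\<dots> = sf (1 - c) - sf c" unfolding tau_def using Mn_ge by simp
  finally have le: "sf c + real i * tau \<le> sf (1 - c)" by simp
  have ge: "sf c \<le> sf c + real i * tau" using tau_pos by simp
  obtain q where "q \<ge> c" "q \<le> 1 - c" "sf q = sf c + real i * tau"
    using IVT'[OF ge le _ sf_cont] c_props by auto
  thus ?thesis unfolding qs_def using someI[of "\<lambda>q. c \<le> q \<and> q \<le> 1 - c \<and> sf q = sf c + real i * tau" q] by blast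
qed

lemma qs_01: "i \<le> Mn \<Longrightarrow> 0 < qs i \<and> qs i < 1"
  using qs_prop[of i] c_props by auto

lemma qs_strict:
  assumes "i < j" "j \<le> Mn"
  shows "qs i < qs j"
proof (rule ccontr)
  assume "\<not> qs i < qs j"
  hence "qs j \<le> qs i" by simp
  moreover have "sf (qs i) < sf (qs j)" using qs_prop[of i] qs_prop[of j] assms tau_pos
    by (simp add: mult_strict_right_mono)
  ultimately show False using sf_strict[of "qs j" "qs i"] qs_01[of i] qs_01[of j] assms
    by (cases "qs j = qs i") auto
qed

lemma qs_mono: "i \<le> j \<Longrightarrow> j \<le> Mn \<Longrightarrow> qs i \<le> qs j"
  using qs_strict[of i j] by (cases "i = j") auto

lemma sf_inj: "c \<le> x \<Longrightarrow> x \<le> 1 - c \<Longrightarrow> c \<le> y \<Longrightarrow> y \<le> 1 - c \<Longrightarrow> sf x = sf y \<Longrightarrow> x = y"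
  using sf_strict[of x y] sf_strict[of y x] c_props by (cases x y rule: linorder_cases) auto

lemma qs0: "qs 0 = c"
proof -
  have h: "c \<le> qs 0" "qs 0 \<le> 1 - c" "sf (qs 0) = sf c" using qs_prop[of 0] by auto
  show ?thesis by (rule sf_inj[OF h(1,2) _ _ h(3)]) (use c_props in auto)
qed

lemma qsM: "qs Mn = 1 - c"
proof -
  have "sf (qs Mn) = sf (1 - c)" using qs_prop[of Mn] Mn_ge unfolding tau_def by simp
  moreover have h: "c \<le> qs Mn" "qs Mn \<le> 1 - c" using qs_prop[of Mn] by auto
  ultimately show ?thesis by (intro sf_inj[OF h(1,2)]) (use c_props in auto)
qed

lemma step: "i < Mn \<Longrightarrow> dq i + dv i = tau \<and> 0 < dq i \<and> 0 \<le> dv i"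
proof -
  assume i: "i < Mn"
  have a: "sf (qs i) = sf c + real i * tau" using qs_prop[of i] i by auto
  have b: "sf (qs (Suc i)) = sf c + real (Suc i) * tau" using qs_prop[of "Suc i"] i by auto
  have "sf (qs (Suc i)) - sf (qs i) = tau" unfolding a b by (simp add: algebra_simps)
  hence 1: "dq i + dv i = tau" unfolding dq_def dv_def Vs_def sf_def by simp
  have 2: "qs i < qs (Suc i)" by (rule qs_strict) (use i in auto)
  have "V (qs (Suc i)) \<le> V (qs i)" using qs_01[of i] qs_01[of "Suc i"] 2 i
    by (intro V_mono) auto
  thus ?thesis using 1 2 unfolding dq_def dv_def Vs_def by simp
qed

lemma al_01: "i < Mn \<Longrightarrow> 0 \<le> al i \<and> al i \<le> 1"
  using step[of i] tau_pos unfolding al_def by (auto simp: divide_le_eq_1)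

lemma dq_ln: "i < Mn \<Longrightarrow> dq i / qs (Suc i) \<le> ln (qs (Suc i)) - ln (qs i)"
proof -
  assume i: "i < Mn"
  have p: "0 < qs i" "0 < qs (Suc i)" using qs_01 i by auto
  have "ln (qs i / qs (Suc i)) \<le> qs i / qs (Suc i) - 1" using p by (intro ln_le_minus_one) auto
  moreover have "ln (qs i / qs (Suc i)) = ln (qs i) - ln (qs (Suc i))" using p by (simp add: ln_div)
  moreover have "qs i / qs (Suc i) - 1 = - (dq i / qs (Suc i))" unfolding dq_def using p
    by (simp add: field_simps)
  ultimately show ?thesis by simp
qed

lemma turn:
  assumes i: "Suc (Suc i) \<le> Mn"
  shows "al (Suc i) - al i \<ge> - 2 * (1 + b) * (ln (qs (Suc i)) - ln (qs i))"
proof -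
  let ?q1 = "qs i" and ?q2 = "qs (Suc i)" and ?q3 = "qs (Suc (Suc i))"
  have q1: "0 < ?q1" using qs_01[of i] i by simp
  have q3: "?q3 < 1" using qs_01[of "Suc (Suc i)"] i by simp
  have q12: "?q1 < ?q2" by (rule qs_strict) (use i in auto)
  have q23: "?q2 < ?q3" by (rule qs_strict) (use i in auto)
  have q: "0 \<le> ?q1" "?q1 < ?q2" "?q2 < ?q3" "?q3 \<le> 1" using q1 q12 q23 q3 by auto
  have tp: "?q2 * ((?q2 - ?q1) * (V ?q2 - V ?q3) - (?q3 - ?q2) * (V ?q1 - V ?q2))
     \<ge> - (1 + b) * (?q2 - ?q1) * (?q3 - ?q2) * (V ?q1 - V ?q3)" by (rule three_point[OF q])
  define a where "a = dq i"
  define cc where "cc = dq (Suc i)"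
  define A where "A = dv i"
  define B where "B = dv (Suc i)"
  have s1: "a + A = tau" "0 < a" "0 \<le> A" using step[of i] i unfolding a_def A_def by auto
  have s2: "cc + B = tau" "0 < cc" "0 \<le> B" using step[of "Suc i"] i unfolding cc_def B_def by auto
  have eqs: "?q2 - ?q1 = a" "?q3 - ?q2 = cc" "V ?q2 - V ?q3 = B" "V ?q1 - V ?q2 = A" "V ?q1 - V ?q3 = A + B"
    unfolding a_def cc_def A_def B_def dq_def dv_def Vs_def by auto
  have ae: "a = tau - A" and ce: "cc = tau - B" using s1 s2 by auto
  have "a * B - cc * A = (tau - A) * B - (tau - B) * A" unfolding ae ce ..
  also have "\<dots> = tau * (B - A)" by (simp add: algebra_simps)
  finally have "a * B - cc * A = tau * (B - A)" .
  hence tp2: "?q2 * (tau * (B - A)) \<ge> - (1 + b) * a * cc * (A + B)" using tp unfolding eqs by simp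
  have cc_le: "cc \<le> tau" and AB: "A + B \<le> 2 * tau" "0 \<le> A + B" using s1 s2 by linarith+
  have "cc * (A + B) \<le> tau * (2 * tau)" using cc_le AB s2(2) by (intro mult_mono) simp_all
  hence "a * (cc * (A + B)) \<le> a * (tau * (2 * tau))" by (rule mult_left_mono) (use s1(2) in simp)
  hence "(1 + b) * (a * (cc * (A + B))) \<le> (1 + b) * (a * (tau * (2 * tau)))" by (rule mult_left_mono) (use b0 in simp)
  moreover have "?q2 * (tau * (B - A)) \<ge> - ((1 + b) * (a * (cc * (A + B))))" using tp2 by (simp only: mult.assoc mult_minus_left)
  ultimately have "?q2 * (tau * (B - A)) \<ge> - ((1 + b) * (a * (tau * (2 * tau))))" by linarith
  hence "tau * (?q2 * (B - A)) \<ge> tau * (- (1 + b) * a * 2 * tau)" by (simp add: algebra_simps)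
  hence QBA: "?q2 * (B - A) \<ge> - (1 + b) * a * 2 * tau" using tau_pos by simp
  define L where "L = ln ?q2 - ln ?q1"
  have "a / ?q2 \<le> L" unfolding a_def L_def using dq_ln i by auto
  hence aL: "a \<le> ?q2 * L" using q by (simp add: pos_divide_le_eq mult.commute)
  have "((1 + b) * 2 * tau) * a \<le> ((1 + b) * 2 * tau) * (?q2 * L)"
    by (rule mult_left_mono[OF aL]) (use b0 tau_pos in simp)
  moreover have "- (1 + b) * a * 2 * tau = - (((1 + b) * 2 * tau) * a)" by (simp add: algebra_simps)
  ultimately have "?q2 * (B - A) \<ge> ?q2 * (- (1 + b) * 2 * tau * L)" using QBA by (simp add: algebra_simps)
  hence "B - A \<ge> - (1 + b) * 2 * tau * L" using q by (simp add: mult_le_cancel_left_pos)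
  hence "(B - A) / tau \<ge> (- (1 + b) * 2 * tau * L) / tau" using tau_pos by (intro divide_right_mono) auto
  moreover have "(- (1 + b) * 2 * tau * L) / tau = - 2 * (1 + b) * L" using tau_pos by simp
  moreover have "(B - A) / tau = al (Suc i) - al i" unfolding al_def A_def B_def by (simp add: diff_divide_distrib)
  ultimately show ?thesis unfolding L_def by simp
qed

end

lemma floor_changes:
  fixes f :: "nat \<Rightarrow> real"
  assumes mono: "\<And>i. f i \<le> f (Suc i)"
  shows "real (card {i\<in>{1..n}. \<lfloor>f i\<rfloor> \<noteq> \<lfloor>f (i - 1)\<rfloor>}) \<le> of_int \<lfloor>f n\<rfloor> - of_int \<lfloor>f 0\<rfloor>"
proof (induction n)
  case 0
  thus ?case by simp
next
  case (Suc n)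
  let ?A = "\<lambda>n. {i\<in>{1..n}. \<lfloor>f i\<rfloor> \<noteq> \<lfloor>f (i - 1)\<rfloor>}"
  have fl: "\<lfloor>f n\<rfloor> \<le> \<lfloor>f (Suc n)\<rfloor>" using mono by (intro floor_mono)
  show ?case
  proof (cases "\<lfloor>f (Suc n)\<rfloor> = \<lfloor>f n\<rfloor>")
    case True
    hence "?A (Suc n) = ?A n" by (auto simp: le_Suc_eq)
    thus ?thesis using Suc True by simp
  next
    case False
    hence "?A (Suc n) = insert (Suc n) (?A n)" by (auto simp: le_Suc_eq)
    moreover have "Suc n \<notin> ?A n" by auto
    ultimately have "card (?A (Suc n)) = Suc (card (?A n))" by simp
    moreover have "\<lfloor>f n\<rfloor> + 1 \<le> \<lfloor>f (Suc n)\<rfloor>" using fl False by simp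
    ultimately show ?thesis using Suc by simp
  qed
qed

context approx begin

definition "Np n = (\<Sum>k<n. max 0 (al k - al (Suc k)))"
definition "Pp n = (\<Sum>k<n. max 0 (al (Suc k) - al k))"

lemma al_decomp: "al n = al 0 + Pp n - Np n"
  by (induction n) (auto simp: Np_def Pp_def)

lemma Np_mono: "Np n \<le> Np (Suc n)" and Pp_mono: "Pp n \<le> Pp (Suc n)"
  unfolding Np_def Pp_def by auto

lemma Np_nonneg: "0 \<le> Np n" and Pp_nonneg: "0 \<le> Pp n"
  unfolding Np_def Pp_def by (auto intro: sum_nonneg)

lemma Np_mono': "m \<le> n \<Longrightarrow> Np m \<le> Np n"
  using Np_mono by (rule lift_Suc_mono_le)

lemma Pp_mono': "m \<le> n \<Longrightarrow> Pp m \<le> Pp n"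
  using Pp_mono by (rule lift_Suc_mono_le)

lemma Np_bound_aux: "Suc n \<le> Mn \<Longrightarrow> Np n \<le> 2 * (1 + b) * (ln (qs n) - ln (qs 0))"
proof (induction n)
  case 0
  thus ?case by (simp add: Np_def)
next
  case (Suc n)
  have t0: "- 2 * (1 + b) * (ln (qs (Suc n)) - ln (qs n)) \<le> al (Suc n) - al n"
    using turn[of n] Suc.prems by simp
  have "- 2 * (1 + b) * (ln (qs (Suc n)) - ln (qs n)) = - (2 * (1 + b) * (ln (qs (Suc n)) - ln (qs n)))" by (simp only: mult_minus_left)
  hence t: "al n - al (Suc n) \<le> 2 * (1 + b) * (ln (qs (Suc n)) - ln (qs n))" using t0 by linarith
  have "qs n \<le> qs (Suc n)" using qs_mono Suc.prems by auto
  hence "0 \<le> ln (qs (Suc n)) - ln (qs n)" using qs_01[of n] Suc.prems by simp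
  hence nn: "0 \<le> 2 * (1 + b) * (ln (qs (Suc n)) - ln (qs n))" using b0 by simp
  have "Np (Suc n) = Np n + max 0 (al n - al (Suc n))" unfolding Np_def by simp
  also have "\<dots> \<le> 2 * (1 + b) * (ln (qs n) - ln (qs 0)) + 2 * (1 + b) * (ln (qs (Suc n)) - ln (qs n))"
    using Suc t nn by (intro add_mono) auto
  also have "\<dots> = 2 * (1 + b) * (ln (qs (Suc n)) - ln (qs 0))" by (simp add: algebra_simps)
  finally show ?case .
qed

definition "Nmax = 2 * (1 + b) * ln (1 / c)"

lemma Np_bound: "n < Mn \<Longrightarrow> Np n \<le> Nmax"
proof -
  assume n: "n < Mn"
  have "Np n \<le> 2 * (1 + b) * (ln (qs n) - ln (qs 0))" using Np_bound_aux n by simp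
  also have "\<dots> \<le> 2 * (1 + b) * ln (1 / c)"
  proof (intro mult_left_mono)
    have "ln (qs n) \<le> 0" using qs_01[of n] n by simp
    thus "ln (qs n) - ln (qs 0) \<le> ln (1 / c)" using qs0 c_props by (simp add: ln_div)
  qed (use b0 in simp)
  finally show ?thesis unfolding Nmax_def .
qed

lemma Pp_bound: "n < Mn \<Longrightarrow> Pp n \<le> Nmax + 1"
  using al_decomp[of n] Np_bound[of n] al_01[of n] al_01[of 0] by linarith

definition "sN = nat \<lceil>1 / sqrt e\<rceil>"

lemma sN_pos: "1 \<le> sN"
proof -
  have "sqrt e < 1" using e_half by simp
  hence "1 < 1 / sqrt e" using e_pos by simp
  thus ?thesis unfolding sN_def by linarith
qed

definition "chP = {i\<in>{1..Mn-1}. \<lfloor>real sN * Pp i\<rfloor> \<noteq> \<lfloor>real sN * Pp (i - 1)\<rfloor>}"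
definition "chN = {i\<in>{1..Mn-1}. \<lfloor>real sN * Np i\<rfloor> \<noteq> \<lfloor>real sN * Np (i - 1)\<rfloor>}"
definition "J = {0, Mn} \<union> {i. i \<le> Mn \<and> sN dvd i} \<union> chP \<union> chN"

lemma chP_card: "real (card chP) \<le> real sN * (Nmax + 1)"
proof -
  have "real (card chP) \<le> of_int \<lfloor>real sN * Pp (Mn-1)\<rfloor> - of_int \<lfloor>real sN * Pp 0\<rfloor>"
    unfolding chP_def by (rule floor_changes) (intro mult_left_mono Pp_mono, simp)
  also have "\<dots> \<le> real sN * Pp (Mn - 1)" by (simp add: Pp_def)
  also have "\<dots> \<le> real sN * (Nmax + 1)" using Pp_bound[of "Mn - 1"] Mn_ge by (intro mult_left_mono) auto
  finally show ?thesis .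
qed

lemma chN_card: "real (card chN) \<le> real sN * Nmax"
proof -
  have "real (card chN) \<le> of_int \<lfloor>real sN * Np (Mn-1)\<rfloor> - of_int \<lfloor>real sN * Np 0\<rfloor>"
    unfolding chN_def by (rule floor_changes) (intro mult_left_mono Np_mono, simp)
  also have "\<dots> \<le> real sN * Np (Mn - 1)" by (simp add: Np_def)
  also have "\<dots> \<le> real sN * Nmax" using Np_bound[of "Mn - 1"] Mn_ge by (intro mult_left_mono) auto
  finally show ?thesis .
qed

lemma mult_card: "card {i. i \<le> (n::nat) \<and> s dvd i} \<le> n div s + 1"
proof -
  have "{i. i \<le> n \<and> s dvd i} \<subseteq> (\<lambda>k. s * k) ` {0..n div s}"
  proof
    fix i assume i: "i \<in> {i. i \<le> n \<and> s dvd i}"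
    then obtain k where k: "i = s * k" by auto
    show "i \<in> (\<lambda>k. s * k) ` {0..n div s}"
    proof (cases "s = 0")
      case True thus ?thesis using k by auto
    next
      case False
      hence "k \<le> n div s" using i k div_le_mono[of "s*k" n s] by simp
      thus ?thesis using k by auto
    qed
  qed
  hence "card {i. i \<le> n \<and> s dvd i} \<le> card ((\<lambda>k. s * k) ` {0..n div s})"
    by (intro card_mono) auto
  also have "\<dots> \<le> card {0..n div s}" by (rule card_image_le) auto
  finally show ?thesis by simp
qed

lemma J_finite: "finite J" and J_sub: "J \<subseteq> {0..Mn}"
proof -
  show "J \<subseteq> {0..Mn}" unfolding J_def chP_def chN_def by auto
  thus "finite J" by (rule finite_subset) auto
qed

lemma J_card: "real (card J) \<le> 3 + real (Mn div sN) + real sN * (2 * Nmax + 1)"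
proof -
  let ?A = "{0, Mn}" and ?B = "{i. i \<le> Mn \<and> sN dvd i}"
  have "card J \<le> card (?A \<union> ?B \<union> chP) + card chN"
    unfolding J_def by (rule card_Un_le)
  also have "\<dots> \<le> card (?A \<union> ?B) + card chP + card chN"
    using card_Un_le[of "?A \<union> ?B" chP] by simp
  also have "\<dots> \<le> card ?A + card ?B + card chP + card chN"
    using card_Un_le[of ?A ?B] by simp
  also have "\<dots> \<le> 2 + (Mn div sN + 1) + card chP + card chN"
    using mult_card[of Mn sN] card_insert_le_m1 by (intro add_right_mono add_mono) (auto simp: card_insert_if)
  finally have "real (card J) \<le> 3 + real (Mn div sN) + real (card chP) + real (card chN)" by linarith
  thus ?thesis using chP_card chN_card by (simp add: algebra_simps)
qed

end

lemma telescope_nat: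
  fixes f :: "nat \<Rightarrow> real"
  shows "j0 \<le> i \<Longrightarrow> (\<Sum>k\<in>{j0..<i}. f k - f (Suc k)) = f j0 - f i"
proof (induction i)
  case 0 thus ?case by simp
next
  case (Suc i)
  show ?case
  proof (cases "j0 = Suc i")
    case True thus ?thesis by simp
  next
    case False
    hence "j0 \<le> i" using Suc.prems by simp
    thus ?thesis using Suc.IH by (simp add: atLeastLessThanSuc)
  qed
qed

lemma sum_dev:
  fixes D :: "nat \<Rightarrow> real"
  assumes "\<And>k. k \<in> {j0..<i} \<Longrightarrow> \<bar>D k - r\<bar> \<le> d"
  shows "\<bar>(\<Sum>k\<in>{j0..<i}. D k) - real (i - j0) * r\<bar> \<le> real (i - j0) * d"
proof -
  have "(\<Sum>k\<in>{j0..<i}. D k) - real (i - j0) * r = (\<Sum>k\<in>{j0..<i}. D k - r)"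
    by (simp add: sum_subtractf)
  also have "\<bar>\<dots>\<bar> \<le> (\<Sum>k\<in>{j0..<i}. \<bar>D k - r\<bar>)" by (rule sum_abs)
  also have "\<dots> \<le> (\<Sum>k\<in>{j0..<i}. d)" using assms by (intro sum_mono) auto
  also have "\<dots> = real (i - j0) * d" by simp
  finally show ?thesis .
qed

context approx begin

definition "ks = sorted_list_of_set J"
definition "K = length ks - 1"
definition "jj m = ks ! m"

lemma ks_len: "length ks = card J" unfolding ks_def by simp
lemma J_ne: "card J \<ge> 2"
proof -
  have "{0, Mn} \<subseteq> J" unfolding J_def by auto
  hence "card {0, Mn} \<le> card J" using J_finite by (intro card_mono)
  thus ?thesis using Mn_ge by simp
qed

lemma K_eq: "Suc K = card J" using J_ne unfolding K_def ks_len by simp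

lemma ks_sorted: "sorted_wrt (<) ks" unfolding ks_def by (rule strict_sorted_list_of_set)
lemma ks_set: "set ks = J" unfolding ks_def using J_finite by simp

lemma jj_less: "x < y \<Longrightarrow> y \<le> K \<Longrightarrow> jj x < jj y"
proof -
  assume a: "x < y" "y \<le> K"
  have "y < length ks" using a K_eq ks_len by simp
  thus "jj x < jj y" unfolding jj_def using sorted_wrt_nth_less[OF ks_sorted a(1)] by simp
qed

lemma jj_less_iff: "x \<le> K \<Longrightarrow> y \<le> K \<Longrightarrow> jj x < jj y \<longleftrightarrow> x < y"
proof -
  assume a: "x \<le> K" "y \<le> K"
  show ?thesis
  proof
    assume h: "jj x < jj y"
    show "x < y"
    proof (rule ccontr)
      assume "\<not> x < y"
      hence "y < x \<or> y = x" by auto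
      thus False using jj_less[of y x] a h by auto
    qed
  next
    assume "x < y" thus "jj x < jj y" using jj_less a by simp
  qed
qed

lemma jj_in: "m \<le> K \<Longrightarrow> jj m \<in> J"
  unfolding jj_def using ks_set K_eq ks_len by (metis less_Suc_eq_le nth_mem)

lemma J_jj: "i \<in> J \<Longrightarrow> \<exists>m\<le>K. jj m = i"
  unfolding jj_def using ks_set K_eq ks_len by (metis in_set_conv_nth less_Suc_eq_le)

lemma jj_le: "m \<le> K \<Longrightarrow> jj m \<le> Mn" by (meson J_sub atLeastAtMost_iff jj_in subsetD)

lemma jj0: "jj 0 = 0"
proof -
  obtain m where m: "m \<le> K" "jj m = 0" using J_jj[of 0] unfolding J_def by auto
  show ?thesis using jj_less[of 0 m] m by (cases m) auto
qed

lemma jjK: "jj K = Mn"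
proof -
  obtain m where m: "m \<le> K" "jj m = Mn" using J_jj[of Mn] unfolding J_def by auto
  have "\<not> m < K"
  proof
    assume "m < K"
    hence "jj m < jj K" by (intro jj_less) auto
    thus False using m jj_le[of K] by simp
  qed
  hence "m = K" using m(1) by simp
  thus ?thesis using m by simp
qed

lemma no_between: "m < K \<Longrightarrow> i \<in> J \<Longrightarrow> jj m < i \<Longrightarrow> i < jj (Suc m) \<Longrightarrow> False"
proof -
  assume a: "m < K" "i \<in> J" "jj m < i" "i < jj (Suc m)"
  obtain k where k: "k \<le> K" "jj k = i" using J_jj a(2) by auto
  have "m < k" using jj_less_iff[of m k] a k by auto
  moreover have "k < Suc m" using jj_less_iff[of k "Suc m"] a k by auto
  ultimately show False by simp
qed

lemma gap: "m < K \<Longrightarrow> jj (Suc m) - jj m \<le> sN"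
proof (rule ccontr)
  assume m: "m < K" and g: "\<not> jj (Suc m) - jj m \<le> sN"
  define i where "i = sN * (jj m div sN + 1)"
  have d: "sN * (jj m div sN) + jj m mod sN = jj m" by (rule mult_div_mod_eq)
  have md: "jj m mod sN < sN" using sN_pos by simp
  have ie: "i = sN * (jj m div sN) + sN" unfolding i_def by (simp add: algebra_simps)
  have "jj m < i" using d md ie by linarith
  moreover have "i \<le> jj m + sN" using d ie by linarith
  moreover have "jj (Suc m) \<le> Mn" using jj_le m by simp
  ultimately have lt: "i < jj (Suc m)" "i \<le> Mn" using g by linarith+
  have "sN dvd i" unfolding i_def by simp
  hence "i \<in> J" unfolding J_def using lt by auto
  thus False using no_between[OF m] \<open>jj m < i\<close> lt(1) by blast
qed

lemma floor_const:
  assumes m: "m < K" and k: "jj m \<le> k" "k < jj (Suc m)"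
  shows "\<lfloor>real sN * Pp k\<rfloor> = \<lfloor>real sN * Pp (jj m)\<rfloor> \<and> \<lfloor>real sN * Np k\<rfloor> = \<lfloor>real sN * Np (jj m)\<rfloor>"
  using k
proof (induction k)
  case 0 thus ?case by simp
next
  case (Suc k)
  show ?case
  proof (cases "jj m = Suc k")
    case True thus ?thesis by simp
  next
    case False
    hence k1: "jj m \<le> k" "k < jj (Suc m)" using Suc.prems by auto
    have "Suc k \<notin> J" using no_between[OF m, of "Suc k"] Suc.prems False by auto
    moreover have "Suc k \<le> Mn - 1" using Suc.prems jj_le[of "Suc m"] m by auto
    ultimately have "\<lfloor>real sN * Pp (Suc k)\<rfloor> = \<lfloor>real sN * Pp k\<rfloor>" "\<lfloor>real sN * Np (Suc k)\<rfloor> = \<lfloor>real sN * Np k\<rfloor>"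
      unfolding J_def chP_def chN_def by auto
    thus ?thesis using Suc.IH[OF k1] by simp
  qed
qed

lemma floor_close: "\<lfloor>x::real\<rfloor> = \<lfloor>y\<rfloor> \<Longrightarrow> \<bar>x - y\<bar> < 1"
proof -
  assume h: "\<lfloor>x::real\<rfloor> = \<lfloor>y\<rfloor>"
  have "of_int \<lfloor>x\<rfloor> \<le> x" "x < of_int \<lfloor>x\<rfloor> + 1" "of_int \<lfloor>y\<rfloor> \<le> y" "y < of_int \<lfloor>y\<rfloor> + 1"
    using floor_correct[of x] floor_correct[of y] by auto
  moreover have "real_of_int \<lfloor>x\<rfloor> = real_of_int \<lfloor>y\<rfloor>" using h by simp
  ultimately show ?thesis unfolding abs_less_iff by linarith
qed

lemma al_band:
  assumes m: "m < K" and k: "jj m \<le> k" "k < jj (Suc m)"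
  shows "\<bar>al k - al (jj m)\<bar> \<le> 2 / real sN"
proof -
  have fc: "\<bar>real sN * Pp k - real sN * Pp (jj m)\<bar> < 1" "\<bar>real sN * Np k - real sN * Np (jj m)\<bar> < 1"
    using floor_const[OF assms] floor_close by blast+
  have sp: "0 < real sN" using sN_pos by simp
  have "real sN * \<bar>Pp k - Pp (jj m)\<bar> < 1" "real sN * \<bar>Np k - Np (jj m)\<bar> < 1"
    using fc sp by (simp_all only: right_diff_distrib[symmetric] abs_mult abs_of_nat)
  hence "\<bar>Pp k - Pp (jj m)\<bar> < 1 / real sN" "\<bar>Np k - Np (jj m)\<bar> < 1 / real sN"
    using sp by (simp_all add: pos_less_divide_eq mult.commute)
  hence "\<bar>Pp k - Pp (jj m)\<bar> \<le> 1 / real sN" "\<bar>Np k - Np (jj m)\<bar> \<le> 1 / real sN" by simp_all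
  moreover have "al k - al (jj m) = (Pp k - Pp (jj m)) - (Np k - Np (jj m))"
    using al_decomp[of k] al_decomp[of "jj m"] by simp
  ultimately show ?thesis by (simp add: abs_le_iff)
qed

end

lemma interp_close:
  fixes a0 a1 A0 A1 t t' n tau rho X :: real
  assumes "\<bar>a0 - A0\<bar> \<le> rho" "\<bar>a1 - A1\<bar> \<le> rho" "0 \<le> t" "t \<le> 1"
    "\<bar>t - t'\<bar> \<le> 1 / n" "\<bar>A1 - A0\<bar> \<le> n * tau" "0 < n"
    "\<bar>X - (A0 + t' * (A1 - A0))\<bar> \<le> 4 * tau"
  shows "\<bar>(a0 + t * (a1 - a0)) - X\<bar> \<le> rho + 5 * tau"
proof -
  have e1: "a0 + t * (a1 - a0) - (A0 + t * (A1 - A0)) = (1 - t) * (a0 - A0) + t * (a1 - A1)"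
    by (simp add: algebra_simps)
  have "\<bar>(1 - t) * (a0 - A0)\<bar> \<le> (1 - t) * rho" using assms by (simp add: abs_mult mult_left_mono)
  moreover have "\<bar>t * (a1 - A1)\<bar> \<le> t * rho" using assms by (simp add: abs_mult mult_left_mono)
  moreover have "\<bar>(1 - t) * (a0 - A0) + t * (a1 - A1)\<bar> \<le> \<bar>(1 - t) * (a0 - A0)\<bar> + \<bar>t * (a1 - A1)\<bar>"
    by (rule abs_triangle_ineq)
  moreover have "(1 - t) * rho + t * rho = rho" by (simp add: algebra_simps)
  ultimately have b1: "\<bar>a0 + t * (a1 - a0) - (A0 + t * (A1 - A0))\<bar> \<le> rho"
    unfolding e1 by linarith
  have "\<bar>(t - t') * (A1 - A0)\<bar> \<le> (1 / n) * (n * tau)"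
    unfolding abs_mult using assms by (intro mult_mono) auto
  also have "\<dots> = tau" using assms by simp
  finally have b2: "\<bar>(A0 + t * (A1 - A0)) - (A0 + t' * (A1 - A0))\<bar> \<le> tau"
    by (simp add: algebra_simps)
  show ?thesis using b1 b2 assms(8) by linarith
qed

context approx begin

lemma chord:
  assumes m: "m < K" and i: "jj m \<le> i" "i \<le> jj (Suc m)"
  defines "t' \<equiv> real (i - jj m) / real (jj (Suc m) - jj m)"
  shows "\<bar>qs i - (qs (jj m) + t' * (qs (jj (Suc m)) - qs (jj m)))\<bar> \<le> 4 * tau"
    and "\<bar>Vs i - (Vs (jj m) + t' * (Vs (jj (Suc m)) - Vs (jj m)))\<bar> \<le> 4 * tau"
proof -
  let ?j0 = "jj m" and ?j1 = "jj (Suc m)"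
  have j01: "?j0 < ?j1" using jj_less m by simp
  have j1M: "?j1 \<le> Mn" using jj_le m by simp
  define n where "n = ?j1 - ?j0"
  define p where "p = i - ?j0"
  have n_pos: "0 < n" and n_le: "n \<le> sN" using j01 gap[OF m] unfolding n_def by auto
  have p_le: "p \<le> n" unfolding p_def n_def using i by auto
  define r where "r = tau * al ?j0"
  define d where "d = tau * (2 / real sN)"
  have dv_al: "k < Mn \<Longrightarrow> dv k = tau * al k" for k unfolding al_def using tau_pos by simp
  have band: "\<bar>dv k - r\<bar> \<le> d" if "k \<in> {?j0..<?j1}" for k
  proof -
    have "k < Mn" "?j0 < Mn" using that j1M j01 by auto
    hence "dv k - r = tau * (al k - al ?j0)" unfolding r_def using dv_al by (simp add: algebra_simps)
    hence "\<bar>dv k - r\<bar> = tau * \<bar>al k - al ?j0\<bar>" using tau_pos by (simp add: abs_mult)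
    also have "\<dots> \<le> tau * (2 / real sN)" using al_band[OF m] that tau_pos by (intro mult_left_mono) auto
    finally show ?thesis unfolding d_def .
  qed
  define Si where "Si = (\<Sum>k\<in>{?j0..<i}. dv k)"
  define S1 where "S1 = (\<Sum>k\<in>{?j0..<?j1}. dv k)"
  have Ei: "\<bar>Si - real p * r\<bar> \<le> real p * d" unfolding Si_def p_def
    by (rule sum_dev) (use band i in auto)
  have E1: "\<bar>S1 - real n * r\<bar> \<le> real n * d" unfolding S1_def n_def
    by (rule sum_dev) (use band in auto)
  have VSi: "Vs ?j0 - Vs i = Si" unfolding Si_def dv_def using telescope_nat[of ?j0 i Vs] i by simp
  have VS1: "Vs ?j0 - Vs ?j1 = S1" unfolding S1_def dv_def using telescope_nat[of ?j0 ?j1 Vs] j01 by simp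
  have qsum: "j \<le> Mn \<Longrightarrow> ?j0 \<le> j \<Longrightarrow> qs j - qs ?j0 = real (j - ?j0) * tau - (\<Sum>k\<in>{?j0..<j}. dv k)" for j
  proof -
    assume j: "j \<le> Mn" "?j0 \<le> j"
    have "(\<Sum>k\<in>{?j0..<j}. dq k) = (\<Sum>k\<in>{?j0..<j}. tau - dv k)"
      using step j by (intro sum.cong) (auto simp: algebra_simps)
    moreover have "(\<Sum>k\<in>{?j0..<j}. dq k) = qs j - qs ?j0"
      unfolding dq_def using telescope_nat[of ?j0 j "\<lambda>k. - qs k"] j by simp
    ultimately show ?thesis by (simp add: sum_subtractf)
  qed
  have qSi: "qs i - qs ?j0 = real p * tau - Si" unfolding Si_def p_def using qsum[of i] i j1M by simp
  have qS1: "qs ?j1 - qs ?j0 = real n * tau - S1" unfolding S1_def n_def using qsum[of ?j1] j01 j1M by simp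
  have tt: "t' = real p / real n" unfolding t'_def p_def n_def by simp
  have key: "\<bar>- Si + t' * S1\<bar> \<le> 4 * tau"
  proof -
    have "- Si + t' * S1 = - (Si - real p * r) + t' * (S1 - real n * r)"
      unfolding tt using n_pos by (simp add: algebra_simps)
    have t'0: "0 \<le> t'" unfolding tt by simp
    have "\<bar>- (Si - real p * r) + t' * (S1 - real n * r)\<bar> \<le> \<bar>- (Si - real p * r)\<bar> + \<bar>t' * (S1 - real n * r)\<bar>"
      by (rule abs_triangle_ineq)
    hence "\<bar>- Si + t' * S1\<bar> \<le> \<bar>Si - real p * r\<bar> + t' * \<bar>S1 - real n * r\<bar>"
      using t'0 \<open>- Si + t' * S1 = - (Si - real p * r) + t' * (S1 - real n * r)\<close> by (simp add: abs_mult)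
    also have "\<dots> \<le> real p * d + t' * (real n * d)"
      using Ei E1 t'0 by (intro add_mono mult_left_mono) auto
    also have "\<dots> = 2 * real p * d" unfolding tt using n_pos by simp
    also have "\<dots> \<le> 2 * real sN * d" using p_le n_le tau_pos unfolding d_def by (intro mult_right_mono) auto
    also have "\<dots> = 4 * tau" unfolding d_def using sN_pos by simp
    finally show ?thesis .
  qed
  have "qs i - (qs ?j0 + t' * (qs ?j1 - qs ?j0)) = - Si + t' * S1"
  proof -
    have "qs i - (qs ?j0 + t' * (qs ?j1 - qs ?j0)) = (qs i - qs ?j0) - t' * (qs ?j1 - qs ?j0)"
      by simp
    also have "\<dots> = (real p * tau - Si) - t' * (real n * tau - S1)"
      unfolding qSi qS1 ..
    also have "\<dots> = - Si + t' * S1" unfolding tt using n_pos by (simp add: algebra_simps)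
    finally show ?thesis .
  qed
  thus "\<bar>qs i - (qs ?j0 + t' * (qs ?j1 - qs ?j0))\<bar> \<le> 4 * tau" using key by simp
  have "Vs i - (Vs ?j0 + t' * (Vs ?j1 - Vs ?j0)) = - Si + t' * S1"
    using VSi VS1 by (simp add: algebra_simps)
  thus "\<bar>Vs i - (Vs ?j0 + t' * (Vs ?j1 - Vs ?j0))\<bar> \<le> 4 * tau" using key by simp
qed

end

definition "Unif = uniform_measure lborel {0..1::real}"

lemma Unif_prob: "prob_space Unif"
  unfolding Unif_def by (intro prob_space_uniform_measure) auto

lemma Unif_sets[simp]: "sets Unif = sets borel" "space Unif = UNIV"
  unfolding Unif_def by auto

lemma meas_Unif: "L \<in> borel_measurable borel \<Longrightarrow> L \<in> borel_measurable Unif"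
  by (metis measurable_cong_sets Unif_sets(1))

lemma real_dist_decode: "L \<in> borel_measurable borel \<Longrightarrow> real_distribution (distr Unif borel L)"
  unfolding real_distribution_def real_distribution_axioms_def
  using Unif_prob meas_Unif by (auto intro: prob_space.prob_space_distr)

lemma fm_Icc: "{a..b::real} \<in> fmeasurable lborel"
  unfolding fmeasurable_def by (auto simp: emeasure_lborel_Icc_eq)

lemma cdf_decode:
  assumes L: "L \<in> borel_measurable borel"
  shows "cdf (distr Unif borel L) v = measure lborel ({0..1} \<inter> L -` {..v})"
proof -
  have "cdf (distr Unif borel L) v = measure Unif (L -` {..v})"
    unfolding cdf_def using meas_Unif[OF L] measurable_sets[OF L, of "{..v}"] by (subst measure_distr) auto
  also have "\<dots> = measure lborel ({0..1} \<inter> L -` {..v})"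
    unfolding Unif_def using measurable_sets[OF L, of "{..v}"] by (subst measure_uniform_measure) (auto simp: emeasure_lborel_Icc_eq)
  finally show ?thesis .
qed

context dist01 begin

lemma levy_decode:
  assumes L: "L \<in> borel_measurable borel" and e: "0 < e"
  and A: "\<And>x. 0 \<le> x \<Longrightarrow> x \<le> 1 \<Longrightarrow> e < x \<Longrightarrow> Q (x - e) \<le> L x + e"
  and B: "\<And>x. 0 \<le> x \<Longrightarrow> x \<le> 1 \<Longrightarrow> x < 1 - e \<Longrightarrow> L x \<le> Q (x + e) + e"
  shows "levy_dist F (cdf (distr Unif borel L)) \<le> e"
proof -
  let ?G = "cdf (distr Unif borel L)"
  have meas: "{0..1} \<inter> L -` {..v} \<in> sets lborel" for v using L by auto
  have G1: "?G v \<le> F (v + e) + e" for v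
  proof (cases "F (v + e) + e \<ge> 1")
    case True
    have "?G v \<le> measure lborel {0..1::real}" unfolding cdf_decode[OF L]
      by (rule measure_mono_fmeasurable) (use meas fm_Icc in auto)
    thus ?thesis using True by simp
  next
    case False
    let ?a = "F (v + e) + e"
    have sub: "{0..1} \<inter> L -` {..v} \<subseteq> {0..?a}"
    proof
      fix x assume x: "x \<in> {0..1} \<inter> L -` {..v}"
      show "x \<in> {0..?a}"
      proof (rule ccontr)
        assume "x \<notin> {0..?a}"
        hence xa: "x > ?a" using x by auto
        have "0 \<le> F (v + e)" by (rule cdf_nonneg)
        hence "0 < x - e" "x - e \<le> 1" using xa x e by auto
        moreover have "\<not> x - e \<le> F (v + e)" using xa by auto
        ultimately have "\<not> Q (x - e) \<le> v + e" using Q_galois by blast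
        moreover have "Q (x - e) \<le> L x + e" using A[of x] x xa e cdf_nonneg[of "v+e"] by auto
        ultimately show False using x by auto
      qed
    qed
    have "?G v \<le> measure lborel {0..?a}" unfolding cdf_decode[OF L]
      by (rule measure_mono_fmeasurable) (use meas fm_Icc sub in auto)
    also have "\<dots> = ?a" using e cdf_nonneg[of "v+e"] by simp
    finally show ?thesis .
  qed
  have G2: "F (v - e) - e \<le> ?G v" for v
  proof (cases "F (v - e) - e \<le> 0")
    case True
    thus ?thesis using measure_nonneg[of lborel] unfolding cdf_decode[OF L] by (smt (verit))
  next
    case False
    let ?b = "F (v - e) - e"
    have sub: "{0..<?b} \<subseteq> {0..1} \<inter> L -` {..v}"
    proof
      fix x assume x: "x \<in> {0..<?b}"
      have F1: "F (v - e) \<le> 1" by (rule cdf_bounded_prob)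
      hence "0 < x + e" "x + e \<le> 1" "x + e \<le> F (v - e)" using x e by auto
      hence "Q (x + e) \<le> v - e" using Q_galois by blast
      moreover have "L x \<le> Q (x + e) + e" using B[of x] x e F1 by auto
      ultimately show "x \<in> {0..1} \<inter> L -` {..v}" using x e F1 by auto
    qed
    have "?b = measure lborel {0..<?b}" using False by simp
    also have "\<dots> \<le> ?G v" unfolding cdf_decode[OF L]
      by (rule measure_mono_fmeasurable) (use meas sub in \<open>auto intro: fmeasurableI2[OF fm_Icc[of 0 1]]\<close>)
    finally show ?thesis .
  qed
  have "e \<in> {\<epsilon>. \<epsilon> \<ge> 0 \<and> (\<forall>v. F (v - \<epsilon>) - \<epsilon> \<le> ?G v \<and> ?G v \<le> F (v + \<epsilon>) + \<epsilon>)}"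
    using G1 G2 e by auto
  thus ?thesis unfolding levy_dist_def by (intro cInf_lower) (auto intro: bdd_belowI[where m=0])
qed

end

definition Ld :: "nat \<Rightarrow> (nat \<Rightarrow> real \<times> real) \<Rightarrow> real \<Rightarrow> real" where
  "Ld K f q = (if q < fst (f 0) then 1 else 0) +
     (\<Sum>m<K. if fst (f m) \<le> q \<and> q < fst (f (Suc m))
        then snd (f m) + (q - fst (f m)) / (fst (f (Suc m)) - fst (f m)) * (snd (f (Suc m)) - snd (f m)) else 0)"

lemma Ld_meas: "(\<lambda>x. Ld K f (1 - x)) \<in> borel_measurable borel"
  unfolding Ld_def by measurable

context approx begin

lemma span: "j0 \<le> j1 \<Longrightarrow> j1 \<le> Mn \<Longrightarrow> \<bar>qs j1 - qs j0\<bar> \<le> real (j1 - j0) * tau \<and> \<bar>Vs j1 - Vs j0\<bar> \<le> real (j1 - j0) * tau"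
proof -
  assume j: "j0 \<le> j1" "j1 \<le> Mn"
  have dqs: "(\<Sum>k\<in>{j0..<j1}. dq k) = qs j1 - qs j0"
    unfolding dq_def using telescope_nat[of j0 j1 "\<lambda>k. - qs k"] j by simp
  have dvs: "(\<Sum>k\<in>{j0..<j1}. dv k) = Vs j0 - Vs j1"
    unfolding dv_def using telescope_nat[of j0 j1 Vs] j by simp
  have b: "k \<in> {j0..<j1} \<Longrightarrow> 0 \<le> dq k \<and> dq k \<le> tau \<and> 0 \<le> dv k \<and> dv k \<le> tau" for k
    using step[of k] j by auto
  have "(\<Sum>k\<in>{j0..<j1}. dq k) \<le> (\<Sum>k\<in>{j0..<j1}. tau)" using b by (intro sum_mono) auto
  moreover have "(\<Sum>k\<in>{j0..<j1}. dv k) \<le> (\<Sum>k\<in>{j0..<j1}. tau)" using b by (intro sum_mono) auto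
  moreover have "0 \<le> (\<Sum>k\<in>{j0..<j1}. dq k)" "0 \<le> (\<Sum>k\<in>{j0..<j1}. dv k)" using b by (auto intro: sum_nonneg)
  ultimately show ?thesis unfolding dqs dvs by auto
qed

definition "rho = e / 8"
definition "rd x = rho * of_int \<lfloor>x / rho\<rfloor>"
definition "knot m = (rd (qs (jj m)), rd (Vs (jj m)))"
definition "ak m = fst (knot m)"
definition "bk m = snd (knot m)"

lemma rho_pos: "0 < rho" unfolding rho_def using e_pos by simp

lemma rd_le: "rd x \<le> x" and rd_ge: "x - rho < rd x"
proof -
  have "of_int \<lfloor>x / rho\<rfloor> \<le> x / rho" "x / rho < of_int \<lfloor>x / rho\<rfloor> + 1" by linarith+
  hence "rho * of_int \<lfloor>x / rho\<rfloor> \<le> rho * (x / rho)" "rho * (x / rho) < rho * (of_int \<lfloor>x / rho\<rfloor> + 1)"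
    using rho_pos by (intro mult_left_mono mult_strict_left_mono; simp)+
  thus "rd x \<le> x" "x - rho < rd x" unfolding rd_def using rho_pos by (simp_all add: algebra_simps)
qed

lemma rd_mono: "x \<le> y \<Longrightarrow> rd x \<le> rd y"
  unfolding rd_def using rho_pos by (intro mult_left_mono) (auto intro!: floor_mono divide_right_mono)

lemma rd_close: "\<bar>rd x - x\<bar> \<le> rho" using rd_le[of x] rd_ge[of x] by simp

lemma ak_mono: "x \<le> y \<Longrightarrow> y \<le> K \<Longrightarrow> ak x \<le> ak y"
proof -
  assume a: "x \<le> y" "y \<le> K"
  have "jj x \<le> jj y" using jj_less[of x y] a by (cases "x = y") auto
  hence "qs (jj x) \<le> qs (jj y)" using jj_le a by (intro qs_mono) auto
  thus ?thesis unfolding ak_def knot_def by (simp add: rd_mono)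
qed

lemma ak0: "ak 0 \<le> c" unfolding ak_def knot_def using jj0 qs0 rd_le by simp
lemma akK: "1 - e < ak K"
proof -
  have "ak K = rd (1 - c)" unfolding ak_def knot_def using jjK qsM by simp
  moreover have "1 - c - rho < rd (1 - c)" by (rule rd_ge)
  moreover have "1 - e \<le> 1 - c - rho" unfolding c_def rho_def using e_pos by simp
  ultimately show ?thesis by linarith
qed

lemma piece_approx:
  assumes m: "m < K" and q: "ak m \<le> q" "q < ak (Suc m)"
  defines "t \<equiv> (q - ak m) / (ak (Suc m) - ak m)"
  shows "\<exists>i\<le>Mn. \<bar>q - qs i\<bar> \<le> e / 2 \<and> \<bar>(bk m + t * (bk (Suc m) - bk m)) - Vs i\<bar> \<le> e / 2"
proof -
  let ?j0 = "jj m" and ?j1 = "jj (Suc m)"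
  have j01: "?j0 < ?j1" using jj_less m by simp
  have j1M: "?j1 \<le> Mn" using jj_le m by simp
  define n where "n = ?j1 - ?j0"
  have n_pos: "0 < n" unfolding n_def using j01 by simp
  have den: "0 < ak (Suc m) - ak m" using q by simp
  have t01: "0 \<le> t" "t < 1" unfolding t_def using q den by (auto simp: divide_less_eq)
  have qt: "q = ak m + t * (ak (Suc m) - ak m)" unfolding t_def using den by simp
  define p where "p = nat \<lfloor>t * real n\<rfloor>"
  have x0: "0 \<le> t * real n" using t01 n_pos by simp
  have "real p = of_int \<lfloor>t * real n\<rfloor>" unfolding p_def using x0 by simp
  hence p1: "real p \<le> t * real n" "t * real n < real p + 1" using floor_correct[of "t * real n"] by linarith+
  have pn: "p \<le> n" using p1 t01 n_pos
    by (smt (verit, ccfv_SIG) mult_left_le_one_le of_nat_0_le_iff of_nat_le_iff)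
  define i where "i = ?j0 + p"
  have i: "?j0 \<le> i" "i \<le> ?j1" unfolding i_def using pn n_def j01 by auto
  have tt: "real (i - ?j0) / real (?j1 - ?j0) = real p / real n" unfolding i_def n_def by simp
  have tdiff: "\<bar>t - real p / real n\<bar> \<le> 1 / real n"
  proof -
    have "real p / real n \<le> t" using p1 n_pos by (simp add: divide_le_eq mult.commute)
    moreover have "t < real p / real n + 1 / real n" using p1 n_pos
      by (simp add: add_divide_distrib[symmetric] less_divide_eq mult.commute)
    ultimately show ?thesis by simp
  qed
  have sp: "\<bar>qs ?j1 - qs ?j0\<bar> \<le> real n * tau" "\<bar>Vs ?j1 - Vs ?j0\<bar> \<le> real n * tau"
    using span[of ?j0 ?j1] j01 j1M unfolding n_def by auto
  have ch: "\<bar>qs i - (qs ?j0 + (real p / real n) * (qs ?j1 - qs ?j0))\<bar> \<le> 4 * tau"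
       "\<bar>Vs i - (Vs ?j0 + (real p / real n) * (Vs ?j1 - Vs ?j0))\<bar> \<le> 4 * tau"
    using chord[OF m i] unfolding tt by auto
  have c1: "\<bar>(ak m + t * (ak (Suc m) - ak m)) - qs i\<bar> \<le> rho + 5 * tau"
    by (rule interp_close[OF _ _ t01(1) _ tdiff sp(1) _ ch(1)])
       (use rd_close t01 n_pos in \<open>auto simp: ak_def knot_def\<close>)
  have c2: "\<bar>(bk m + t * (bk (Suc m) - bk m)) - Vs i\<bar> \<le> rho + 5 * tau"
    by (rule interp_close[OF _ _ t01(1) _ tdiff sp(2) _ ch(2)])
       (use rd_close t01 n_pos in \<open>auto simp: bk_def knot_def\<close>)
  have "rho + 5 * tau \<le> e / 2" using tau_le e_pos unfolding rho_def by linarith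
  moreover have "i \<le> Mn" using i j1M by simp
  ultimately show ?thesis using c1 c2 qt by (intro exI[of _ i]) auto
qed

end

lemma Ld_cong: "(\<And>m. m \<le> K \<Longrightarrow> f m = g m) \<Longrightarrow> Ld K f q = Ld K g q"
  unfolding Ld_def by (intro arg_cong2[where f="(+)"] sum.cong) auto

context approx begin

lemma Ld_knot: "Ld K knot q = (if q < ak 0 then 1 else 0) +
     (\<Sum>m<K. if ak m \<le> q \<and> q < ak (Suc m)
        then bk m + (q - ak m) / (ak (Suc m) - ak m) * (bk (Suc m) - bk m) else 0)"
  unfolding Ld_def ak_def bk_def ..

lemma Ld_low: "q < ak 0 \<Longrightarrow> Ld K knot q = 1"
proof -
  assume q: "q < ak 0"
  have "\<And>m. m < K \<Longrightarrow> \<not> ak m \<le> q" using ak_mono[of 0] q by (meson leD le_less_trans less_imp_le_nat zero_le)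
  thus ?thesis unfolding Ld_knot using q by simp
qed

lemma Ld_high: "ak K \<le> q \<Longrightarrow> Ld K knot q = 0"
proof -
  assume q: "ak K \<le> q"
  have "\<And>m. m < K \<Longrightarrow> \<not> q < ak (Suc m)" using ak_mono[of _ K] q
    by (meson Suc_leI le_less_trans order_refl not_less)
  moreover have "\<not> q < ak 0" using ak_mono[of 0 K] q by simp
  ultimately show ?thesis unfolding Ld_knot by simp
qed

lemma Ld_mid:
  assumes m: "m < K" and q: "ak m \<le> q" "q < ak (Suc m)"
  shows "Ld K knot q = bk m + (q - ak m) / (ak (Suc m) - ak m) * (bk (Suc m) - bk m)"
proof -
  have "\<not> q < ak 0" using ak_mono[of 0 m] m q by simp
  moreover have "(\<Sum>m'<K. if ak m' \<le> q \<and> q < ak (Suc m')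
        then bk m' + (q - ak m') / (ak (Suc m') - ak m') * (bk (Suc m') - bk m') else 0)
      = (if ak m \<le> q \<and> q < ak (Suc m)
        then bk m + (q - ak m) / (ak (Suc m) - ak m) * (bk (Suc m) - bk m) else 0)"
  proof -
    let ?g = "\<lambda>m'. if ak m' \<le> q \<and> q < ak (Suc m')
        then bk m' + (q - ak m') / (ak (Suc m') - ak m') * (bk (Suc m') - bk m') else 0"
    have "(\<Sum>m'\<in>{..<K}. ?g m') = (\<Sum>m'\<in>{m}. ?g m')"
    proof (rule sum.mono_neutral_right)
      show "\<forall>m'\<in>{..<K} - {m}. ?g m' = 0"
      proof
        fix m' assume m': "m' \<in> {..<K} - {m}"
        show "?g m' = 0"
        proof (cases "m' < m")
          case True
          hence "ak (Suc m') \<le> ak m" using ak_mono[of "Suc m'" m] m by simp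
          thus ?thesis using q by simp
        next
          case False
          hence "ak (Suc m) \<le> ak m'" using ak_mono[of "Suc m" m'] m' by auto
          thus ?thesis using q by simp
        qed
      qed
    qed (use m in auto)
    thus ?thesis by simp
  qed
  ultimately show ?thesis unfolding Ld_knot using q by simp
qed

lemma find_piece:
  assumes q: "ak 0 \<le> q" "q < ak K"
  shows "\<exists>m<K. ak m \<le> q \<and> q < ak (Suc m)"
proof -
  define S where "S = {m. m \<le> K \<and> ak m \<le> q}"
  have fin: "finite S" "S \<noteq> {}" unfolding S_def using q by auto
  define m where "m = Max S"
  have mS: "m \<in> S" unfolding m_def using fin by (rule Max_in)
  have mK: "m < K" using mS q unfolding S_def by (cases "m = K") auto
  have "\<not> Suc m \<in> S" using Max_ge[OF fin(1), of "Suc m"] unfolding m_def[symmetric] by auto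
  hence "q < ak (Suc m)" using mK unfolding S_def by auto
  thus ?thesis using mK mS unfolding S_def by auto
qed

lemma pointwise:
  assumes q: "0 \<le> q" "q \<le> 1"
  shows "q < 1 - e \<Longrightarrow> V (q + e) \<le> Ld K knot q + e"
    and "e < q \<Longrightarrow> Ld K knot q \<le> V (q - e) + e"
proof -
  have ce: "c < e" unfolding c_def using e_pos by simp
  consider (low) "q < ak 0" | (high) "ak K \<le> q" | (mid) "ak 0 \<le> q" "q < ak K" by linarith
  hence "(q < 1 - e \<longrightarrow> V (q + e) \<le> Ld K knot q + e) \<and> (e < q \<longrightarrow> Ld K knot q \<le> V (q - e) + e)"
  proof cases
    case low
    hence "Ld K knot q = 1" by (rule Ld_low)
    moreover have "q < e" using low ak0 ce by simp
    moreover have "q < 1 - e \<longrightarrow> V (q + e) \<le> 1" using V_01[of "q + e"] q e_pos by auto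
    ultimately show ?thesis using e_pos by auto
  next
    case high
    hence "Ld K knot q = 0" by (rule Ld_high)
    moreover have "\<not> q < 1 - e" using high akK by simp
    moreover have "e < q \<longrightarrow> 0 \<le> V (q - e)" using V_01[of "q - e"] q e_pos by auto
    ultimately show ?thesis using e_pos by auto
  next
    case mid
    then obtain m where m: "m < K" "ak m \<le> q" "q < ak (Suc m)" using find_piece by blast
    obtain i where i: "i \<le> Mn" "\<bar>q - qs i\<bar> \<le> e / 2"
      "\<bar>(bk m + (q - ak m) / (ak (Suc m) - ak m) * (bk (Suc m) - bk m)) - Vs i\<bar> \<le> e / 2"
      using piece_approx[OF m] by blast
    have y: "\<bar>Ld K knot q - Vs i\<bar> \<le> e / 2" using i(3) Ld_mid[OF m] by simp
    have qi: "0 < qs i" "qs i < 1" using qs_01 i(1) by auto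
    have qq: "qs i \<le> q + e / 2" "q - e / 2 \<le> qs i" using i(2) unfolding abs_le_iff by linarith+
    have A: "q < 1 - e \<longrightarrow> V (q + e) \<le> Ld K knot q + e"
    proof
      assume "q < 1 - e"
      hence "V (q + e) \<le> V (qs i)" using qq qi e_pos q by (intro V_mono) auto
      thus "V (q + e) \<le> Ld K knot q + e" using y unfolding Vs_def by linarith
    qed
    have B: "e < q \<longrightarrow> Ld K knot q \<le> V (q - e) + e"
    proof
      assume "e < q"
      hence "V (qs i) \<le> V (q - e)" using qq qi e_pos q by (intro V_mono) auto
      thus "Ld K knot q \<le> V (q - e) + e" using y unfolding Vs_def by linarith
    qed
    show ?thesis using A B by blast
  qed
  thus "q < 1 - e \<Longrightarrow> V (q + e) \<le> Ld K knot q + e" "e < q \<Longrightarrow> Ld K knot q \<le> V (q - e) + e" by auto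
qed

lemma levy_knot: "levy_dist F (cdf (distr Unif borel (\<lambda>x. Ld K knot (1 - x)))) \<le> e"
proof (rule levy_decode[OF Ld_meas e_pos])
  fix x :: real assume x: "0 \<le> x" "x \<le> 1" "e < x"
  have "V (1 - x + e) \<le> Ld K knot (1 - x) + e" using pointwise(1)[of "1 - x"] x by auto
  thus "Q (x - e) \<le> Ld K knot (1 - x) + e" unfolding V_def by (simp add: algebra_simps)
next
  fix x :: real assume x: "0 \<le> x" "x \<le> 1" "x < 1 - e"
  have "Ld K knot (1 - x) \<le> V (1 - x - e) + e" using pointwise(2)[of "1 - x"] x by auto
  thus "Ld K knot (1 - x) \<le> Q (x + e) + e" unfolding V_def by (simp add: algebra_simps)
qed

end

context approx begin

lemma X_L_facts:
  shows "1 \<le> 1 / sqrt e" "(1 / sqrt e) * (1 / sqrt e) = 1 / e" "2 / 3 \<le> ln (1 / e)"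
    "ln 2 \<le> ln (1 / e)"
proof -
  have se: "0 < sqrt e" "sqrt e < 1" using e_pos e_half by auto
  show "1 \<le> 1 / sqrt e" using se by simp
  show "(1 / sqrt e) * (1 / sqrt e) = 1 / e" using e_pos by (simp add: real_sqrt_mult[symmetric])
  have "2 \<le> 1 / e" using e_pos e_half by (simp add: field_simps)
  thus "ln 2 \<le> ln (1 / e)" using e_pos by (subst ln_le_cancel_iff) auto
  thus "2 / 3 \<le> ln (1 / e)" using ln2_ge_two_thirds by simp
qed

lemma K_bound:
  assumes bb: "b \<le> \<beta> + 1" and b0': "0 \<le> \<beta>"
  shows "real K \<le> (124 + 24 * \<beta>) * (1 / sqrt e) * ln (1 / e)"
proof -
  define X where "X = 1 / sqrt e"
  define L where "L = ln (1 / e)"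
  have X1: "1 \<le> X" and XX: "X * X = 1 / e" and L23: "2/3 \<le> L" and L2: "ln 2 \<le> L"
    using X_L_facts unfolding X_def L_def by auto
  have "1 * L \<le> X * L" by (rule mult_right_mono) (use X1 L23 in auto)
  hence XL: "2/3 \<le> X * L" using L23 by linarith
  have sN_le: "real sN \<le> 2 * X" and sN_ge: "X \<le> real sN"
    unfolding sN_def X_def using X1[unfolded X_def] by linarith+
  have Mn_le: "real Mn \<le> 32 / e + 1"
  proof -
    have cc: "of_int \<lceil>32 / e\<rceil> - 1 < 32 / e" "32 / e \<le> of_int \<lceil>32 / e\<rceil>" using ceiling_correct[of "32/e"] by auto
    have "0 < 32 / e" using e_pos by simp
    hence "0 \<le> \<lceil>32 / e\<rceil>" using cc by linarith
    hence "real Mn = of_int \<lceil>32 / e\<rceil>" unfolding Mn_def by simp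
    thus ?thesis using cc by linarith
  qed
  have "real (Mn div sN) \<le> real Mn / real sN" by (rule of_nat_div_le_of_nat)
  also have "\<dots> \<le> (32 / e + 1) / X" using Mn_le sN_ge X1 by (intro frac_le) auto
  also have "\<dots> = (32 * (X * X) + 1) / X" using XX by simp
  also have "\<dots> = 32 * X + 1 / X" using X1 by (simp add: add_divide_distrib)
  also have "\<dots> \<le> 32 * X + 1" using X1 by simp
  finally have md: "real (Mn div sN) \<le> 32 * X + 1" .
  have lc: "ln (1 / c) = ln 4 + L" unfolding c_def L_def using e_pos by (simp add: ln_div)
  have l4: "ln (4::real) = 2 * ln 2" using ln_realpow[of 2 2] by simp
  have Nm: "Nmax \<le> 6 * (2 + \<beta>) * L"
  proof -
    have "ln (1 / c) \<le> 3 * L" using lc l4 L2 by linarith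
    moreover have "0 \<le> ln (1 / c)" using lc l4 L2 L23 ln2_ge_two_thirds by linarith
    ultimately have "2 * (1 + b) * ln (1 / c) \<le> 2 * (2 + \<beta>) * (3 * L)"
      using bb b0 by (intro mult_mono) auto
    moreover have "2 * (2 + \<beta>) * (3 * L) = 6 * (2 + \<beta>) * L" by (simp add: algebra_simps)
    ultimately show ?thesis unfolding Nmax_def by linarith
  qed
  have Nm0: "0 \<le> Nmax" unfolding Nmax_def using lc l4 L2 L23 ln2_ge_two_thirds b0 by simp
  have "2 * (6 * (2 + \<beta>) * L) = 12 * (2 + \<beta>) * L" by simp
  hence n2: "2 * Nmax + 1 \<le> 12 * (2 + \<beta>) * L + 2 * L" using Nm L23 by linarith
  have "real sN * (2 * Nmax + 1) \<le> (2 * X) * (12 * (2 + \<beta>) * L + 2 * L)"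
    by (rule mult_mono[OF sN_le n2]) (use X1 Nm0 in auto)
  also have "\<dots> = X * L * (52 + 24 * \<beta>)" by (simp add: algebra_simps)
  finally have t3: "real sN * (2 * Nmax + 1) \<le> X * L * (52 + 24 * \<beta>)" .
  have "X * 32 \<le> X * (48 * L)" by (rule mult_left_mono) (use X1 L23 in auto)
  hence "32 * X \<le> 48 * (X * L)" by (simp add: algebra_simps)
  hence "real (card J) \<le> 4 + 48 * (X * L) + X * L * (52 + 24 * \<beta>)" using J_card md t3 by linarith
  also have "\<dots> \<le> (124 + 24 * \<beta>) * X * L" using XL by (simp add: algebra_simps)
  finally have "real (card J) \<le> (124 + 24 * \<beta>) * X * L" .
  moreover have "real K \<le> real (card J)" using K_eq by simp
  ultimately show ?thesis unfolding X_def L_def by simp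
qed

definition "grid = (\<lambda>k. (e / 8) * real k) ` {0..nat \<lfloor>8 / e\<rfloor>}"

lemma rd_grid: "0 \<le> x \<Longrightarrow> x \<le> 1 \<Longrightarrow> rd x \<in> grid"
proof -
  assume x: "0 \<le> x" "x \<le> 1"
  have "0 \<le> x / rho" using x rho_pos by simp
  hence f0: "0 \<le> \<lfloor>x / rho\<rfloor>" by simp
  have "x / rho \<le> 8 / e" unfolding rho_def using x e_pos by (simp add: field_simps)
  hence "\<lfloor>x / rho\<rfloor> \<le> \<lfloor>8 / e\<rfloor>" by (rule floor_mono)
  hence "nat \<lfloor>x / rho\<rfloor> \<in> {0..nat \<lfloor>8 / e\<rfloor>}" by auto
  moreover have "real (nat \<lfloor>x / rho\<rfloor>) = of_int \<lfloor>x / rho\<rfloor>" using f0 by simp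
  hence "rd x = (e / 8) * real (nat \<lfloor>x / rho\<rfloor>)" unfolding rd_def by (simp add: rho_def)
  ultimately show ?thesis unfolding grid_def by blast
qed

lemma knot_grid: "m \<le> K \<Longrightarrow> knot m \<in> grid \<times> grid"
proof -
  assume m: "m \<le> K"
  have "jj m \<le> Mn" using jj_le m by simp
  hence "0 < qs (jj m)" "qs (jj m) < 1" using qs_01 by auto
  moreover have "0 \<le> Vs (jj m)" "Vs (jj m) \<le> 1" unfolding Vs_def using V_01 calculation by auto
  ultimately show ?thesis unfolding knot_def using rd_grid by auto
qed

end

definition "gridE e = (\<lambda>k. (e / 8) * real k) ` {0..nat \<lfloor>8 / e\<rfloor>}"
definition codes :: "real \<Rightarrow> nat \<Rightarrow> (nat \<times> (nat \<Rightarrow> real \<times> real)) set" where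
  "codes e Kmax = {0..Kmax} \<times> ({0..Kmax} \<rightarrow>\<^sub>E (gridE e \<times> gridE e))"
definition "dec Kf = distr Unif borel (\<lambda>x. Ld (fst Kf) (snd Kf) (1 - x))"

lemma gridE_card: "0 < e \<Longrightarrow> card (gridE e) = nat \<lfloor>8 / e\<rfloor> + 1"
  unfolding gridE_def by (subst card_image) (auto simp: inj_on_def)

lemma gridE_finite: "finite (gridE e)" unfolding gridE_def by simp

lemma codes_finite: "finite (codes e Kmax)"
  unfolding codes_def using gridE_finite by (intro finite_cartesian_product finite_PiE finite_atLeastAtMost) auto

lemma codes_card: "card (codes e Kmax) = (Kmax + 1) * (card (gridE e) * card (gridE e)) ^ (Kmax + 1)"
  unfolding codes_def using gridE_finite by (simp add: card_cartesian_product card_PiE)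

lemma pow_ge_n: "2 \<le> (g::nat) \<Longrightarrow> n \<le> g ^ n"
proof -
  assume g: "2 \<le> g"
  have "n < 2 ^ n" by (rule less_exp)
  also have "(2::nat) ^ n \<le> g ^ n" using g by (rule power_mono) simp
  finally show ?thesis by simp
qed

lemma card_bound:
  fixes e \<beta> :: real and Kmax :: nat
  assumes e: "0 < e" "e < 1/2" and \<beta>: "0 \<le> \<beta>"
    and Km: "Kmax = nat \<lceil>(124 + 24 * \<beta>) * (1 / sqrt e) * ln (1 / e)\<rceil>"
  shows "real (card (codes e Kmax)) \<le> 2 powr (24 * (128 + 24 * \<beta>) * e powr (-1/2) * (ln (1 / e)) ^ 2)"
proof -
  define X where "X = 1 / sqrt e"
  define L where "L = ln (1 / e)"
  define g where "g = card (gridE e)"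
  define n where "n = Kmax + 1"
  have se: "0 < sqrt e" "sqrt e < 1" using e by auto
  have X1: "1 \<le> X" unfolding X_def using se by simp
  have "2 \<le> 1 / e" using e by (simp add: field_simps)
  hence L2: "ln 2 \<le> L" unfolding L_def using e by (subst ln_le_cancel_iff) auto
  have L23: "2 / 3 \<le> L" using L2 ln2_ge_two_thirds by simp
  have "1 * L \<le> X * L" by (rule mult_right_mono) (use X1 L23 in auto)
  hence XL: "2/3 \<le> X * L" using L23 by linarith
  have ep: "e powr (-1/2) = X"
  proof -
    have "e powr (-1/2) = e powr (- (1/2))" by simp
    also have "\<dots> = inverse (e powr (1/2))" by (rule powr_minus)
    also have "e powr (1/2) = sqrt e" using powr_half_sqrt[of e] e by simp
    finally show ?thesis unfolding X_def by (simp add: inverse_eq_divide)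
  qed
  have g_eq: "g = nat \<lfloor>8 / e\<rfloor> + 1" unfolding g_def using gridE_card e by simp
  have "16 \<le> 8 / e" using e by (simp add: field_simps)
  hence g2: "2 \<le> g" unfolding g_eq by linarith
  have g_le: "real g \<le> 9 / e"
  proof -
    have "0 \<le> \<lfloor>8 / e\<rfloor>" using \<open>16 \<le> 8 / e\<close> by linarith
    hence "real g = of_int \<lfloor>8 / e\<rfloor> + 1" unfolding g_eq by simp
    also have "\<dots> \<le> 8 / e + 1" by linarith
    also have "\<dots> \<le> 9 / e" using e by (simp add: field_simps)
    finally show ?thesis .
  qed
  have lg: "log 2 (real g) \<le> 8 * L"
  proof -
    have "ln (real g) \<le> ln (9 / e)" using g_le g2 e by (subst ln_le_cancel_iff) auto
    also have "\<dots> = ln 9 + L" unfolding L_def using e by (simp add: ln_div)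
    also have "ln (9::real) \<le> ln 16" by simp
    also have "ln (16::real) = 4 * ln 2" using ln_realpow[of 2 4] by simp
    finally have "ln (real g) \<le> 5 * L" using L2 by linarith
    moreover have "log 2 (real g) = ln (real g) / ln 2" unfolding log_def ..
    moreover have "0 \<le> ln (real g)" using g2 by simp
    ultimately have "log 2 (real g) \<le> 5 * L / ln 2" by (simp add: divide_right_mono)
    also have "\<dots> \<le> 5 * L / (2/3)" using L23 ln2_ge_two_thirds by (intro divide_left_mono) auto
    also have "\<dots> \<le> 8 * L" using L23 by simp
    finally show ?thesis .
  qed
  have n_le: "real n \<le> (127 + 24 * \<beta>) * X * L"
  proof -
    define Z where "Z = (124 + 24 * \<beta>) * X * L"
    have Z0: "0 \<le> Z" unfolding Z_def using \<beta> X1 L23 by simp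
    have cc: "of_int \<lceil>Z\<rceil> - 1 < Z" "Z \<le> of_int \<lceil>Z\<rceil>" using ceiling_correct[of Z] by auto
    hence "0 \<le> \<lceil>Z\<rceil>" using Z0 by linarith
    hence "real Kmax = of_int \<lceil>Z\<rceil>" unfolding Km Z_def X_def L_def by simp
    hence "real Kmax \<le> (124 + 24 * \<beta>) * X * L + 1" using cc unfolding Z_def by linarith
    thus ?thesis unfolding n_def using XL by (simp add: algebra_simps)
  qed
  have "card (codes e Kmax) = n * (g * g) ^ n" unfolding codes_card n_def g_def by simp
  also have "\<dots> \<le> g ^ n * (g * g) ^ n" using pow_ge_n[OF g2] by simp
  also have "\<dots> = g ^ (3 * n)"
  proof -
    have "(g * g) ^ n = g ^ n * g ^ n" by (rule power_mult_distrib)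
    moreover have "3 * n = n + (n + n)" by simp
    hence "g ^ (3 * n) = g ^ n * (g ^ n * g ^ n)" by (simp only: power_add)
    ultimately show ?thesis by simp
  qed
  finally have "real (card (codes e Kmax)) \<le> real (g ^ (3 * n))" by (simp only: of_nat_le_iff)
  also have "\<dots> = real g ^ (3 * n)" by simp
  also have "\<dots> = 2 powr (real (3 * n) * log 2 (real g))"
  proof -
    have lg2: "2 powr (log 2 (real g)) = real g" using g2 by simp
    have "2 powr (real (3 * n) * log 2 (real g)) = (2 powr (log 2 (real g))) powr real (3 * n)"
      by (simp add: powr_powr mult.commute)
    also have "\<dots> = real g powr real (3 * n)" unfolding lg2 ..
    also have "\<dots> = real g ^ (3 * n)" using g2 by (subst powr_realpow) auto
    finally have h: "real g ^ (3 * n) = 2 powr (real (3 * n) * log 2 (real g))" by simp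
    show ?thesis by (rule h)
  qed
  also have "\<dots> \<le> 2 powr (24 * (128 + 24 * \<beta>) * X * L ^ 2)"
  proof (intro powr_mono)
    have "real (3 * n) * log 2 (real g) \<le> (3 * ((127 + 24 * \<beta>) * X * L)) * (8 * L)"
      using n_le lg g2 by (intro mult_mono) auto
    also have "\<dots> = 24 * (127 + 24 * \<beta>) * X * L ^ 2" by (simp add: power2_eq_square algebra_simps)
    also have "\<dots> \<le> 24 * (128 + 24 * \<beta>) * X * L ^ 2" using X1 by (intro mult_right_mono) auto
    finally show "real (3 * n) * log 2 (real g) \<le> 24 * (128 + 24 * \<beta>) * X * L ^ 2" .
  qed auto
  finally show ?thesis unfolding ep L_def by simp
qed

theorem theorem2:
  fixes \<beta> :: real
  assumes "\<beta> \<ge> 0"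
  shows "\<exists>C k. C > 0 \<and> (\<forall>\<epsilon>::real. 0 < \<epsilon> \<and> \<epsilon> < 1/2 \<longrightarrow>
           describable (irreg_class \<beta>) (C * \<epsilon> powr (-1/2) * (ln (1/\<epsilon>)) ^ k) \<epsilon>)"
proof (intro exI[of _ "24 * (128 + 24 * \<beta>)"] exI[of _ 2] conjI allI impI)
  show "0 < 24 * (128 + 24 * \<beta>)" using assms by simp
  fix \<epsilon> :: real assume e: "0 < \<epsilon> \<and> \<epsilon> < 1/2"
  define Kmax where "Kmax = nat \<lceil>(124 + 24 * \<beta>) * (1 / sqrt \<epsilon>) * ln (1 / \<epsilon>)\<rceil>"
  define C' where "C' = dec ` codes \<epsilon> Kmax"
  show "describable (irreg_class \<beta>) (24 * (128 + 24 * \<beta>) * \<epsilon> powr (-1/2) * (ln (1/\<epsilon>)) ^ 2) \<epsilon>"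
    unfolding describable_def
  proof (intro exI[of _ C'] conjI ballI)
    show "finite C'" unfolding C'_def by (intro finite_imageI codes_finite)
    have "card C' \<le> card (codes \<epsilon> Kmax)" unfolding C'_def using codes_finite by (rule card_image_le)
    hence "real (card C') \<le> real (card (codes \<epsilon> Kmax))" by simp
    also have "\<dots> \<le> 2 powr (24 * (128 + 24 * \<beta>) * \<epsilon> powr (-1/2) * (ln (1 / \<epsilon>)) ^ 2)"
      using card_bound[of \<epsilon> \<beta> Kmax] e assms Kmax_def by simp
    finally show "real (card C') \<le> 2 powr (24 * (128 + 24 * \<beta>) * \<epsilon> powr (-1/2) * (ln (1/\<epsilon>)) ^ 2)" .
  next
    fix M' assume "M' \<in> C'"
    thus "real_distribution M'" unfolding C'_def dec_def using real_dist_decode[OF Ld_meas] by auto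
  next
    fix M assume M: "M \<in> irreg_class \<beta>"
    obtain b where b: "0 \<le> b" "b \<le> \<beta> + 1" "reg01 M b" using class_reg[OF M] by auto
    interpret A: approx M b \<epsilon>
      unfolding approx_def approx_axioms_def using b e by auto
    have KK: "A.K \<le> Kmax"
    proof -
      have "real A.K \<le> (124 + 24 * \<beta>) * (1 / sqrt \<epsilon>) * ln (1 / \<epsilon>)" by (rule A.K_bound[OF b(2) assms])
      thus ?thesis unfolding Kmax_def by linarith
    qed
    have gr: "A.grid = gridE \<epsilon>" unfolding A.grid_def gridE_def ..
    define f where "f = (\<lambda>m. if m \<in> {0..Kmax} then (if m \<le> A.K then A.knot m else (0, 0)) else undefined)"
    have "(0::real) \<in> gridE \<epsilon>" unfolding gridE_def by (auto intro!: image_eqI[of _ _ 0])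
    hence fin: "f \<in> {0..Kmax} \<rightarrow>\<^sub>E (gridE \<epsilon> \<times> gridE \<epsilon>)"
      unfolding f_def using A.knot_grid gr by auto
    have code: "(A.K, f) \<in> codes \<epsilon> Kmax" unfolding codes_def using KK fin by auto
    have "dec (A.K, f) = distr Unif borel (\<lambda>x. Ld A.K A.knot (1 - x))"
      unfolding dec_def using KK by (simp, intro arg_cong[where f="distr Unif borel"] ext Ld_cong) (auto simp: f_def)
    hence "levy_dist (cdf M) (cdf (dec (A.K, f))) \<le> \<epsilon>" using A.levy_knot by simp
    moreover have "dec (A.K, f) \<in> C'" unfolding C'_def using code by blast
    ultimately show "\<exists>M'\<in>C'. levy_dist (cdf M) (cdf M') \<le> \<epsilon>" by blast
  qed
qed

end
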